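(* Let $\alpha,\beta$ be nonzero algebraic integers with $\alpha/\beta$ not a root of unity, and let $L_n=L_n(\alpha,\beta)=\frac{\alpha^n-\beta^n}{\alpha-\beta}$. Suppose that for some integer $m\ge2$, $L_n^m\in\mathbb Z$ for all $n\ge0$. Then there exists an algebraic integer $\gamma$ with $\gamma^m\in\mathbb Q$ and $\alpha=\gamma\alpha'$, $\beta=\gamma\beta'$, such that either $L_n(\alpha',\beta')\in\mathbb Q$ for all $n$, or $m$ is even and there are coprime integers $r,s$ with $\alpha'=\sqrt r+\sqrt s$, $\beta'=\sqrt r-\sqrt s$, so that $L_n(\alpha',\beta')^2\in\mathbb Q$ for all $n$.
   Context: $L_n(x,y)=(x^n-y^n)/(x-y)$. *)

theory Defs
  imports "HOL-Computational_Algebra.Computational_Algebra"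
begin

definition lucas :: "complex \<Rightarrow> complex \<Rightarrow> nat \<Rightarrow> complex" where
  "lucas x y n = (x ^ n - y ^ n) / (x - y)"

end

theory Submission
  imports Defs
begin

abbreviation ev :: "rat poly \<Rightarrow> complex \<Rightarrow> complex" where
  "ev p z \<equiv> poly (map_poly of_rat p) z"

lemma map_rat_add: "map_poly (of_rat :: rat \<Rightarrow> complex) (p + q) = map_poly of_rat p + map_poly of_rat q"
  by (intro poly_eqI) (simp add: coeff_map_poly of_rat_add)

lemma map_rat_diff: "map_poly (of_rat :: rat \<Rightarrow> complex) (p - q) = map_poly of_rat p - map_poly of_rat q"
  by (intro poly_eqI) (simp add: coeff_map_poly of_rat_diff)

lemma map_rat_mult: "map_poly (of_rat :: rat \<Rightarrow> complex) (p * q) = map_poly of_rat p * map_poly of_rat q"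
  by (intro poly_eqI) (simp add: coeff_map_poly coeff_mult of_rat_sum of_rat_mult)

lemma map_rat_power: "map_poly (of_rat :: rat \<Rightarrow> complex) (p ^ k) = map_poly of_rat p ^ k"
  by (induction k) (simp_all add: map_rat_mult)

lemma map_rat_pderiv: "map_poly (of_rat :: rat \<Rightarrow> complex) (pderiv p) = pderiv (map_poly of_rat p)"
  by (intro poly_eqI) (simp add: coeff_map_poly coeff_pderiv of_rat_mult of_rat_add)

lemma map_rat_const: "map_poly (of_rat :: rat \<Rightarrow> complex) [:c:] = [:of_rat c:]"
  by (simp add: map_poly_pCons)

lemma ev_of_rat: "ev p (of_rat q) = of_rat (poly p q)"
  by (induction p) (simp_all add: map_poly_pCons of_rat_add of_rat_mult)

lemma map_rat_eq0: "map_poly (of_rat :: rat \<Rightarrow> complex) p = 0 \<longleftrightarrow> p = 0"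
  by (rule map_poly_eq_0_iff) auto

lemma degree_map_rat: "degree (map_poly (of_rat :: rat \<Rightarrow> complex) p) = degree p"
  by (rule degree_map_poly) auto


lemma unique_root_rat:
  fixes x :: complex and H :: "nat \<Rightarrow> rat poly"
  assumes root: "\<And>n. ev (H n) x = 0" and nz: "H n0 \<noteq> 0"
    and uniq: "\<And>z. (\<And>n. ev (H n) z = 0) \<Longrightarrow> z \<notin> \<rat> \<Longrightarrow> z = x"
  shows "x \<in> \<rat>"
proof (rule ccontr)
  assume xn: "x \<notin> \<rat>"
  define S where "S = {p :: rat poly. p \<noteq> 0 \<and> ev p x = 0}"
  have "H n0 \<in> S" using nz root by (simp add: S_def)
  hence ex: "\<exists>d. \<exists>p\<in>S. degree p = d" by blast
  define d where "d = (LEAST d. \<exists>p\<in>S. degree p = d)"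
  obtain F where F: "F \<in> S" "degree F = d" using LeastI_ex[OF ex] unfolding d_def by blast
  have mind: "\<And>G. G \<noteq> 0 \<Longrightarrow> ev G x = 0 \<Longrightarrow> degree F \<le> degree G"
    using F(2) unfolding d_def by (metis (mono_tags, lifting) S_def Least_le mem_Collect_eq)
  have F0: "F \<noteq> 0" "ev F x = 0" using F by (auto simp: S_def)
  have dvdH: "F dvd H n" for n
  proof -
    have eq: "H n = F * (H n div F) + H n mod F" by simp
    have "ev (H n) x = ev F x * ev (H n div F) x + ev (H n mod F) x"
      by (subst eq) (simp only: map_rat_add map_rat_mult poly_add poly_mult)
    hence r: "ev (H n mod F) x = 0" using F0 root by simp
    show ?thesis
    proof (rule ccontr)
      assume "\<not> F dvd H n"
      hence "H n mod F \<noteq> 0" by (simp add: mod_eq_0_iff_dvd)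
      hence "degree (H n mod F) < degree F"
        using degree_mod_less' F0(1) by blast
      with mind[OF \<open>H n mod F \<noteq> 0\<close> r] show False by simp
    qed
  qed
  have allroots: "z = x" if z: "poly (map_poly of_rat F) z = 0" for z
  proof (cases "z \<in> \<rat>")
    case False
    show ?thesis
    proof (rule uniq[OF _ False])
      fix n
      obtain Q where "H n = F * Q" using dvdH[of n] by blast
      hence "ev (H n) z = ev F z * ev Q z" by (simp add: map_rat_mult)
      thus "ev (H n) z = 0" using z by simp
    qed
  next
    case True
    then obtain q where zq: "z = of_rat q" by (auto elim: Rats_cases)
    hence "poly F q = 0" using z by (simp add: ev_of_rat)
    then obtain G where G: "F = [:-q,1:] * G" by (metis dvdE poly_eq_0_iff_dvd)
    have Gnz: "G \<noteq> 0" using G F0 by auto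
    have "ev F x = ev [:-q,1:] x * ev G x" unfolding G map_rat_mult poly_mult ..
    also have "ev [:-q,1:] x = x - z" using zq by (simp add: map_poly_pCons of_rat_minus)
    finally have "ev F x = (x - z) * ev G x" .
    moreover have "x \<noteq> z" using xn zq by auto
    ultimately have "ev G x = 0" using F0 by simp
    from mind[OF Gnz this] have "degree F \<le> degree G" .
    moreover have "degree F = degree G + 1"
    proof -
      have "degree ([:-q,1:] * G) = degree [:-q,1:] + degree G" by (rule degree_mult_eq) (use Gnz in auto)
      thus ?thesis using G by simp
    qed
    ultimately show ?thesis by simp
  qed
  have dF: "degree F \<ge> 1"
  proof (rule ccontr)
    assume "\<not> degree F \<ge> 1"
    then obtain c where "F = [:c:]" using degree0_coeffs by force
    thus False using F0 by (auto simp: map_poly_pCons)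
  qed
  have "degree F = 1"
  proof (rule ccontr)
    assume "degree F \<noteq> 1"
    hence d2: "degree F \<ge> 2" using dF by simp
    let ?F = "map_poly (of_rat :: rat \<Rightarrow> complex) F"
    obtain G where G: "?F = [:-x,1:] * G" using F0(2) by (metis dvdE poly_eq_0_iff_dvd)
    have Gnz: "G \<noteq> 0" using G F0(1) map_rat_eq0 by (metis mult_zero_right)
    have "degree ?F = degree G + 1"
    proof -
      have "degree ([:-x,1:] * G) = degree [:-x,1:] + degree G" by (rule degree_mult_eq) (use Gnz in auto)
      thus ?thesis using G by simp
    qed
    hence dG: "degree G \<ge> 1" using d2 degree_map_rat[of F] by simp
    have "\<exists>y. poly G y = 0"
      by (rule fundamental_theorem_of_algebra_alt) (use dG in auto)
    then obtain y where y: "poly G y = 0" by blast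
    have "poly ?F y = 0" using G y by simp
    hence "y = x" by (rule allroots)
    then obtain K where K: "G = [:-x,1:] * K" using y by (metis dvdE poly_eq_0_iff_dvd)
    have "poly (pderiv ?F) x = 0" unfolding G K pderiv_mult poly_add poly_mult by simp
    hence "ev (pderiv F) x = 0" by (simp add: map_rat_pderiv)
    moreover have "pderiv F \<noteq> 0" using dF by (simp add: pderiv_eq_0_iff)
    ultimately have "degree F \<le> degree (pderiv F)" by (rule mind[rotated])
    thus False using dF by (simp add: degree_pderiv)
  qed
  then obtain a b where ab: "F = [:a, b:]" "b \<noteq> 0"
    using degree1_coeffs by blast
  have "of_rat a + x * of_rat b = 0" using F0(2) ab by (simp add: map_poly_pCons)
  hence "x = - of_rat a / of_rat b" using ab(2) by (simp add: field_simps eq_neg_iff_add_eq_0 add.commute)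
  hence "x = of_rat (- a / b)" by (simp add: of_rat_divide of_rat_minus)
  thus False using xn by auto
qed


lemma exp_indep:
  fixes R :: "complex set"
  assumes "finite R"
  shows "(\<And>n. (\<Sum>r\<in>R. c r * r ^ n) = 0) \<Longrightarrow> s \<in> R \<Longrightarrow> c s = 0"
  using assms
proof (induction R arbitrary: c s rule: finite_induct)
  case empty
  then show ?case by simp
next
  case (insert t R)
  have IH: "c r = 0" if "r \<in> R" for r
  proof -
    have "(\<Sum>r\<in>R. (c r * (r - t)) * r ^ n) = 0" for n
    proof -
      have e1: "c t * t ^ n + (\<Sum>r\<in>R. c r * r ^ n) = 0" using insert.prems(1)[of n] insert.hyps by simp
      have e2: "c t * t ^ Suc n + (\<Sum>r\<in>R. c r * r ^ Suc n) = 0" using insert.prems(1)[of "Suc n"] insert.hyps by simp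
      have "(\<Sum>r\<in>R. (c r * (r - t)) * r ^ n) = (\<Sum>r\<in>R. c r * r ^ Suc n) - t * (\<Sum>r\<in>R. c r * r ^ n)"
        by (simp add: sum_distrib_left sum_subtractf[symmetric] algebra_simps)
      also have "\<dots> = 0" using e1 e2
        by (metis (no_types, lifting) add_diff_cancel_left' diff_self mult.assoc mult.left_commute
              mult_minus_right power_Suc eq_neg_iff_add_eq_0 add.commute)
      finally show ?thesis .
    qed
    from insert.IH[OF this that] have "c r * (r - t) = 0" .
    moreover have "r \<noteq> t" using that insert.hyps by auto
    ultimately show ?thesis by simp
  qed
  have "c t * t ^ 0 + (\<Sum>r\<in>R. c r * r ^ 0) = 0" using insert.prems(1)[of 0] insert.hyps by simp
  hence ct: "c t = 0" using IH by simp
  show ?case using insert.prems(2) ct IH by auto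
qed

lemma match:
  fixes A B \<rho> \<sigma> :: "nat \<Rightarrow> complex"
  assumes inj: "inj_on \<sigma> {..m}" "inj_on \<rho> {..m}"
    and eq: "\<And>n. (\<Sum>j\<le>m. A j * \<rho> j ^ n) = (\<Sum>k\<le>m. B k * \<sigma> k ^ n)"
    and j: "j \<le> m" "A j \<noteq> 0"
  shows "\<exists>k\<le>m. \<sigma> k = \<rho> j \<and> B k = A j"
proof -
  define R where "R = \<rho> ` {..m} \<union> \<sigma> ` {..m}"
  define c where "c r = (\<Sum>i\<in>{i. i \<in> {..m} \<and> \<rho> i = r}. A i) - (\<Sum>i\<in>{i. i \<in> {..m} \<and> \<sigma> i = r}. B i)" for r
  have fR: "finite R" by (simp add: R_def)
  have "(\<Sum>r\<in>R. c r * r ^ n) = 0" for n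
  proof -
    have s1: "(\<Sum>r\<in>R. (\<Sum>i\<in>{i. i \<in> {..m} \<and> \<rho> i = r}. A i * \<rho> i ^ n)) = (\<Sum>j\<le>m. A j * \<rho> j ^ n)"
      by (rule sum.group) (auto simp: R_def fR)
    have s2: "(\<Sum>r\<in>R. (\<Sum>i\<in>{i. i \<in> {..m} \<and> \<sigma> i = r}. B i * \<sigma> i ^ n)) = (\<Sum>j\<le>m. B j * \<sigma> j ^ n)"
      by (rule sum.group) (auto simp: R_def fR)
    have "(\<Sum>r\<in>R. c r * r ^ n) = (\<Sum>r\<in>R. (\<Sum>i\<in>{i. i \<in> {..m} \<and> \<rho> i = r}. A i * \<rho> i ^ n))
        - (\<Sum>r\<in>R. (\<Sum>i\<in>{i. i \<in> {..m} \<and> \<sigma> i = r}. B i * \<sigma> i ^ n))"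
      unfolding c_def sum_subtractf[symmetric] left_diff_distrib sum_distrib_right
      by (intro sum.cong refl arg_cong2[where f="(-)"]) auto
    also have "\<dots> = 0" using s1 s2 eq[of n] by simp
    finally show ?thesis .
  qed
  from exp_indep[OF fR this] have c0: "c (\<rho> j) = 0" using j by (auto simp: R_def)
  have "{i. i \<in> {..m} \<and> \<rho> i = \<rho> j} = {j}" using inj(2) j by (auto dest: inj_onD)
  hence cA: "c (\<rho> j) = A j - (\<Sum>i\<in>{i. i \<in> {..m} \<and> \<sigma> i = \<rho> j}. B i)" by (simp add: c_def)
  show ?thesis
  proof (cases "\<exists>k\<le>m. \<sigma> k = \<rho> j")
    case True
    then obtain k where k: "k \<le> m" "\<sigma> k = \<rho> j" by blast
    have "{i. i \<in> {..m} \<and> \<sigma> i = \<rho> j} = {k}" using inj(1) k unfolding inj_on_def by auto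
    thus ?thesis using c0 cA k by auto
  next
    case False
    hence e: "{i. i \<in> {..m} \<and> \<sigma> i = \<rho> j} = {}" by auto
    have "c (\<rho> j) = A j" unfolding cA e by simp
    thus ?thesis using c0 j by simp
  qed
qed


lemma lucas_pow_expand:
  fixes p q :: complex
  assumes "p \<noteq> q"
  shows "lucas p q n ^ m = (\<Sum>j\<le>m. (of_nat (m choose j) * (-1)^(m-j) / (p-q)^m) * (p^j*q^(m-j))^n)"
proof -
  have "lucas p q n ^ m = (p^n + (- (q^n)))^m / (p-q)^m" by (simp add: lucas_def power_divide)
  also have "(p^n + (- (q^n)))^m = (\<Sum>j\<le>m. of_nat (m choose j) * (p^n)^j * (- (q^n))^(m-j))"
    by (rule binomial_ring)
  also have "\<dots> / (p-q)^m = (\<Sum>j\<le>m. (of_nat (m choose j) * (-1)^(m-j) / (p-q)^m) * (p^j*q^(m-j))^n)"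
    unfolding sum_divide_distrib
  proof (intro sum.cong refl)
    fix j
    have "(p^n)^j * (- (q^n))^(m-j) = (-1)^(m-j) * (p^j*q^(m-j))^n"
      by (simp add: power_mult_distrib power_minus[of "q^n"] power_mult[symmetric] mult.commute)
    thus "of_nat (m choose j) * (p^n)^j * (- (q^n))^(m-j) / (p-q)^m =
          (of_nat (m choose j) * (-1)^(m-j) / (p-q)^m) * (p^j*q^(m-j))^n"
      by (simp add: field_simps)
  qed
  finally show ?thesis .
qed

lemma pow_inj:
  fixes r :: complex
  assumes "r \<noteq> 0" "\<not> (\<exists>k::nat. k > 0 \<and> r ^ k = 1)" "r ^ i = r ^ j"
  shows "i = j"
proof (rule ccontr)
  assume ne: "i \<noteq> j"
  have *: False if "i' < j'" "r ^ i' = r ^ j'" for i' j'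
  proof -
    have "r ^ j' = r ^ i' * r ^ (j' - i')" using that(1) by (simp add: power_add[symmetric])
    hence "r ^ (j' - i') = 1" using that(2) assms(1) by simp
    thus False using assms(2) that(1) zero_less_diff by blast
  qed
  show False using ne assms(3) *[of i j] *[of j i] by (cases "i < j") auto
qed

lemma geom_inj:
  fixes p q :: complex
  assumes "p \<noteq> 0" "q \<noteq> 0" "\<not> (\<exists>k::nat. k > 0 \<and> (p/q) ^ k = 1)"
  shows "inj_on (\<lambda>j. p^j*q^(m-j)) {..m}"
proof (rule inj_onI)
  fix i j assume ij: "i \<in> {..m}" "j \<in> {..m}" "p^i*q^(m-i) = p^j*q^(m-j)"
  have e: "p^k*q^(m-k) = (p/q)^k * q^m" if "k \<le> m" for k
  proof -
    have "q^m = q^k * q^(m-k)" using that by (simp add: power_add[symmetric])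
    thus ?thesis using assms by (simp add: power_divide)
  qed
  have "(p/q)^i = (p/q)^j" using ij e[of i] e[of j] assms(2) by simp
  thus "i = j" by (rule pow_inj[rotated 2]) (use assms in auto)
qed

lemma choose_ge_m:
  assumes "0 < k" "k < m" shows "m \<le> m choose k"
proof (cases "2*k \<le> m")
  case True
  have "m choose 1 \<le> m choose k" by (rule binomial_mono) (use assms True in auto)
  thus ?thesis by simp
next
  case False
  have "m choose 1 \<le> m choose (m-k)" by (rule binomial_mono) (use assms False in auto)
  thus ?thesis using binomial_symmetric[of k m] assms by simp
qed

lemma choose_gt_m:
  assumes "2 \<le> k" "k + 2 \<le> m" shows "m < m choose k"
proof -
  have "m choose 2 \<le> m choose k"
  proof (cases "2*k \<le> m")
    case True
    show ?thesis by (rule binomial_mono) (use assms True in auto)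
  next
    case False
    have "m choose 2 \<le> m choose (m-k)" by (rule binomial_mono) (use assms False in auto)
    thus ?thesis using binomial_symmetric[of k m] assms by simp
  qed
  moreover have "m < m choose 2"
  proof -
    have "m choose 2 = m * (m-1) div 2" by (simp add: choose_two)
    moreover have "m * 3 \<le> m * (m - 1)"
      by (rule mult_left_mono) (use assms in auto)
    moreover have "m \<ge> 4" using assms by simp
    ultimately show ?thesis
    proof -
      assume a1: "m choose 2 = m * (m - 1) div 2" and a2: "m * 3 \<le> m * (m - 1)" and a3: "m \<ge> 4"
      define X where "X = m * (m - 1)"
      have "m < X div 2" using a2 a3 unfolding X_def[symmetric] by presburger
      thus ?thesis using a1 X_def by simp
    qed
  qed
  ultimately show ?thesis by linarith
qed


lemma key:
  fixes a b p q :: complex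
  assumes ab: "a + b = 1" and pq: "p + q = 1" and p0: "p \<noteq> 0" and q0: "q \<noteq> 0"
    and nr: "\<not> (\<exists>k::nat. k > 0 \<and> (p/q) ^ k = 1)" and m2: "m \<ge> 2"
    and am: "a^m = p^m" and bm: "b^m = q^m"
    and c: "a^(m-1)*b = p^(m-1)*q \<or> a*b^(m-1) = p^(m-1)*q"
  shows "a * b = p * q"
  using c
proof
  assume h: "a^(m-1)*b = p^(m-1)*q"
  have mm: "m = Suc (m-1)" using m2 by simp
  have "a^m * b = a * (p^(m-1)*q)" using h mm by (metis mult.assoc power_Suc)
  hence "p^(m-1) * (p * b) = p^(m-1) * (a * q)" using am mm by (metis mult.assoc mult.left_commute power_Suc)
  hence "p * b = a * q" using p0 by simp
  hence "p * (1 - a) = a * (1 - p)" using ab pq by (metis add_diff_cancel_left')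
  hence "p = a" by (simp add: algebra_simps)
  thus ?thesis using ab pq by (metis add_left_cancel)
next
  assume h: "a*b^(m-1) = p^(m-1)*q"
  show ?thesis
  proof (cases "m = 2")
    case True thus ?thesis using h by simp
  next
    case False
    hence m3: "m \<ge> 3" using m2 by simp
    define P where "P = p^m"
    define Q where "Q = q^m"
    have P0: "P \<noteq> 0" and Q0: "Q \<noteq> 0" using p0 q0 by (auto simp: P_def Q_def)
    have "(a*b^(m-1))^m = (p^(m-1)*q)^m" using h by simp
    moreover have "(a*b^(m-1))^m = a^m * (b^m)^(m-1)"
      by (simp add: power_mult_distrib power_mult[symmetric] ac_simps)
    moreover have "(p^(m-1)*q)^m = (p^m)^(m-1) * q^m"
      by (simp add: power_mult_distrib power_mult[symmetric] ac_simps)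
    ultimately have "P * Q^(m-1) = P^(m-1) * Q" unfolding P_def Q_def
      using am bm by simp
    moreover have "m - 1 = Suc (m - 2)" using m3 by simp
    ultimately have "P * Q * Q^(m-2) = P * Q * P^(m-2)" by (simp add: algebra_simps)
    hence "Q^(m-2) = P^(m-2)" using P0 Q0 by simp
    hence "(p/q)^(m*(m-2)) = 1" using q0 Q0 p0
      by (simp add: P_def Q_def power_divide power_mult)
    moreover have "m*(m-2) > 0" using m3 by simp
    ultimately show ?thesis using nr by blast
  qed
qed


lemma core:
  fixes p q a b :: complex and m :: nat
  assumes pq: "p + q = 1" and ab: "a + b = 1" and p0: "p \<noteq> 0" and q0: "q \<noteq> 0"
    and a0: "a \<noteq> 0" and b0: "b \<noteq> 0" and m2: "m \<ge> 2"
    and nrp: "\<not> (\<exists>k::nat. k > 0 \<and> (p/q) ^ k = 1)"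
    and nra: "\<not> (\<exists>k::nat. k > 0 \<and> (a/b) ^ k = 1)"
    and eqn: "\<And>n. lucas a b n ^ m = lucas p q n ^ m"
  shows "a * b = p * q"
proof -
  have pnq: "p \<noteq> q" using nrp[simplified, rule_format, of 1] q0 by auto
  have anb: "a \<noteq> b" using nra[simplified, rule_format, of 1] b0 by auto
  define A where "A j = of_nat (m choose j) * (-1)^(m-j) / (p-q)^m" for j
  define B where "B j = of_nat (m choose j) * (-1)^(m-j) / (a-b)^m" for j
  define \<rho> where "\<rho> j = p^j*q^(m-j)" for j
  define \<sigma> where "\<sigma> j = a^j*b^(m-j)" for j
  have injr: "inj_on \<rho> {..m}" unfolding \<rho>_def by (rule geom_inj) (use p0 q0 nrp in auto)
  have injs: "inj_on \<sigma> {..m}" unfolding \<sigma>_def by (rule geom_inj) (use a0 b0 nra in auto)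
  have eq: "(\<Sum>j\<le>m. A j * \<rho> j ^ n) = (\<Sum>k\<le>m. B k * \<sigma> k ^ n)" for n
    using eqn[of n] lucas_pow_expand[OF pnq, of n m] lucas_pow_expand[OF anb, of n m]
    unfolding A_def B_def \<rho>_def \<sigma>_def by simp
  have Anz: "A j \<noteq> 0" if "j \<le> m" for j using that pnq by (simp add: A_def)
  have Bnz: "B j \<noteq> 0" if "j \<le> m" for j using that anb by (simp add: B_def)
  have M1: "\<exists>k\<le>m. \<sigma> k = \<rho> j \<and> B k = A j" if "j \<le> m" for j
    by (rule match[OF injs injr eq that Anz[OF that]])
  have M2: "\<exists>k\<le>m. \<rho> k = \<sigma> j \<and> A k = B j" if "j \<le> m" for j
    by (rule match[OF injr injs eq[symmetric] that Bnz[OF that]])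
  define eA where "eA = cmod (p-q)^m"
  define eB where "eB = cmod (a-b)^m"
  have eA0: "eA > 0" using pnq by (simp add: eA_def)
  have eB0: "eB > 0" using anb by (simp add: eB_def)
  have nA: "cmod (A j) = real (m choose j) / eA" for j
    by (simp add: A_def eA_def norm_divide norm_mult norm_power)
  have nB: "cmod (B j) = real (m choose j) / eB" for j
    by (simp add: B_def eB_def norm_divide norm_mult norm_power)
  define j0 where "j0 = m div 2"
  have j0m: "j0 \<le> m" by (simp add: j0_def)
  have cpos: "real (m choose j0) > 0" using j0m by simp
  have "eB \<le> eA"
  proof -
    obtain k where k: "k \<le> m" "B k = A j0" using M1[OF j0m] by blast
    have "real (m choose k) / eB = real (m choose j0) / eA" using k nA nB by metis
    moreover have "real (m choose k) \<le> real (m choose j0)" unfolding j0_def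
      using binomial_maximum by simp
    ultimately have "real (m choose j0) / eA \<le> real (m choose j0) / eB"
      using eB0 by (metis divide_right_mono less_eq_real_def)
    thus ?thesis using cpos eA0 eB0 by (simp add: divide_le_cancel frac_le_eq field_simps)
  qed
  moreover have "eA \<le> eB"
  proof -
    obtain k where k: "k \<le> m" "A k = B j0" using M2[OF j0m] by blast
    have "real (m choose k) / eA = real (m choose j0) / eB" using k nA nB by metis
    moreover have "real (m choose k) \<le> real (m choose j0)" unfolding j0_def
      using binomial_maximum by simp
    ultimately have "real (m choose j0) / eB \<le> real (m choose j0) / eA"
      using eA0 by (metis divide_right_mono less_eq_real_def)
    thus ?thesis using cpos eA0 eB0 by (simp add: divide_le_cancel frac_le_eq field_simps)
  qed
  ultimately have eAB: "eA = eB" by simp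
  have CM: "\<exists>k\<le>m. \<sigma> k = \<rho> j \<and> m choose k = m choose j" if jm: "j \<le> m" for j
  proof -
    obtain k where k: "k \<le> m" "\<sigma> k = \<rho> j" "B k = A j" using M1[OF jm] by blast
    have "real (m choose k) / eB = real (m choose j) / eA" using k nA nB by metis
    hence "real (m choose k) = real (m choose j)" using eAB eA0 by simp
    thus ?thesis using k by (metis of_nat_eq_iff)
  qed
  have one: "k = 0 \<or> k = m" if "k \<le> m" "m choose k = 1" for k
    using choose_ge_m[of k m] that m2 by (cases "k = 0 \<or> k = m") auto
  have em: "k = 1 \<or> k = m - 1" if "k \<le> m" "m choose k = m" for k
  proof (rule ccontr)
    assume "\<not> (k = 1 \<or> k = m - 1)"
    moreover have "k \<noteq> 0" "k \<noteq> m" using that m2 by (auto intro!: Nat.gr0I)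
    ultimately have "2 \<le> k" "k + 2 \<le> m" using that by auto
    from choose_gt_m[OF this] that show False by simp
  qed
  obtain k1 where k1: "k1 \<le> m" "\<sigma> k1 = p^m" "m choose k1 = 1"
    using CM[of m] by (auto simp: \<rho>_def)
  obtain k0 where k0: "k0 \<le> m" "\<sigma> k0 = q^m" "m choose k0 = 1"
    using CM[of 0] by (auto simp: \<rho>_def)
  obtain k2 where k2: "k2 \<le> m" "\<sigma> k2 = p^(m-1)*q" "m choose k2 = m"
    using CM[of "m-1"] m2 binomial_symmetric[of 1 m] by (auto simp: \<rho>_def)
  have "\<rho> m \<noteq> \<rho> 0" using injr m2 unfolding inj_on_def by force
  hence pmq: "p^m \<noteq> q^m" by (simp add: \<rho>_def)
  have s0: "\<sigma> 0 = b^m" and sm: "\<sigma> m = a^m" by (simp_all add: \<sigma>_def)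
  have s1: "\<sigma> 1 = a*b^(m-1)" by (simp add: \<sigma>_def)
  have sm1: "\<sigma> (m-1) = a^(m-1)*b" using m2 by (simp add: \<sigma>_def)
  have k1c: "k1 = 0 \<or> k1 = m" using one k1 by blast
  have k0c: "k0 = 0 \<or> k0 = m" using one k0 by blast
  have k2c: "k2 = 1 \<or> k2 = m - 1" using em k2 by blast
  show ?thesis
  proof (cases "k1 = m")
    case True
    hence "k0 = 0" using k0c k0 k1 pmq by auto
    hence am: "a^m = p^m" and bm: "b^m = q^m" using True k0 k1 s0 sm by auto
    have "a^(m-1)*b = p^(m-1)*q \<or> a*b^(m-1) = p^(m-1)*q" using k2c k2 s1 sm1 by auto
    from key[OF ab pq p0 q0 nrp m2 am bm this] show ?thesis .
  next
    case False
    hence "k1 = 0" using k1c by simp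
    hence "k0 = m" using k0c k0 k1 pmq by auto
    hence bm: "b^m = p^m" and am: "a^m = q^m" using \<open>k1 = 0\<close> k0 k1 s0 sm by auto
    have "b^(m-1)*a = p^(m-1)*q \<or> b*a^(m-1) = p^(m-1)*q" using k2c k2 s1 sm1
      by (auto simp: ac_simps)
    from key[OF _ pq p0 q0 nrp m2 bm am this] ab show ?thesis by (simp add: ac_simps)
  qed
qed


fun gp :: "nat \<Rightarrow> rat poly" where
  "gp 0 = 0"
| "gp (Suc 0) = 1"
| "gp (Suc (Suc n)) = gp (Suc n) - [:0,1:] * gp n"

lemma lucas_rec:
  fixes a b :: complex
  assumes "a \<noteq> b"
  shows "lucas a b (Suc (Suc n)) = (a + b) * lucas a b (Suc n) - a * b * lucas a b n"
proof -
  have e: "a^(Suc(Suc n)) - b^(Suc(Suc n)) = (a+b)*(a^Suc n - b^Suc n) - a*b*(a^n-b^n)"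
    by (simp add: algebra_simps)
  show ?thesis unfolding lucas_def e
    by (simp only: diff_divide_distrib[symmetric] times_divide_eq_right)
qed

lemma gp_lucas:
  fixes a b :: complex
  assumes "a + b = 1" "a \<noteq> b"
  shows "ev (gp n) (a * b) = lucas a b n"
proof (induction n rule: gp.induct)
  case 1 thus ?case by (simp add: lucas_def)
next
  case 2 thus ?case using assms by (simp add: lucas_def)
next
  case (3 n)
  have "ev (gp (Suc (Suc n))) (a*b) = ev (gp (Suc n)) (a*b) - a * b * ev (gp n) (a*b)"
    by (simp add: map_rat_diff map_rat_mult map_poly_pCons)
  also have "\<dots> = lucas a b (Suc (Suc n))" using 3 lucas_rec[OF assms(2), of n] assms(1) by simp
  finally show ?case .
qed

lemma gp_rat: "z \<in> \<rat> \<Longrightarrow> ev (gp n) z \<in> \<rat>"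
  by (auto elim!: Rats_cases simp: ev_of_rat)

lemma lucas_nz:
  fixes p q :: complex
  assumes "q \<noteq> 0" "\<not> (\<exists>k::nat. k > 0 \<and> (p/q) ^ k = 1)" "n > 0"
  shows "lucas p q n \<noteq> 0"
proof
  assume h: "lucas p q n = 0"
  have pq: "p \<noteq> q" using assms(1,2) by (metis div_self power_one_right zero_less_one)
  hence "p ^ n = q ^ n" using h by (simp add: lucas_def)
  hence "(p/q)^n = 1" using assms(1) by (simp add: power_divide)
  thus False using assms by blast
qed


theorem lemma6:
  fixes \<alpha> \<beta> :: complex and m :: nat
  assumes "algebraic_int \<alpha>" and "algebraic_int \<beta>"
    and "\<alpha> \<noteq> 0" and "\<beta> \<noteq> 0"
    and "\<not> (\<exists>k::nat. k > 0 \<and> (\<alpha> / \<beta>) ^ k = 1)"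
    and "m \<ge> 2"
    and "\<forall>n::nat. (lucas \<alpha> \<beta> n) ^ m \<in> \<int>"
  shows "\<exists>\<gamma> \<alpha>' \<beta>'. algebraic_int \<gamma> \<and> \<gamma> ^ m \<in> \<rat> \<and> \<alpha> = \<gamma> * \<alpha>' \<and> \<beta> = \<gamma> * \<beta>' \<and>
           ((\<forall>n::nat. lucas \<alpha>' \<beta>' n \<in> \<rat>) \<or>
            (even m \<and> (\<exists>r s :: int. coprime r s \<and>
                 \<alpha>' = csqrt (of_int r) + csqrt (of_int s) \<and>
                 \<beta>' = csqrt (of_int r) - csqrt (of_int s) \<and>
                 (\<forall>n::nat. (lucas \<alpha>' \<beta>' n) ^ 2 \<in> \<rat>))))"
proof -
  note a0 = assms(3) and b0 = assms(4) and nr = assms(5) and m2 = assms(6) and hL = assms(7)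
  define P where "P = \<alpha> + \<beta>"
  have P0: "P \<noteq> 0"
  proof
    assume "P = 0"
    hence "\<alpha> = - \<beta>" by (simp add: P_def eq_neg_iff_add_eq_0)
    hence "(\<alpha>/\<beta>)^2 = 1" using b0 by (simp add: power2_eq_square)
    thus False using nr by (metis zero_less_numeral)
  qed
  have L2: "lucas \<alpha> \<beta> 2 = P"
  proof -
    have "\<alpha> \<noteq> \<beta>" using nr b0 by (metis div_self power_one_right zero_less_one)
    hence "\<alpha> - \<beta> \<noteq> 0" by simp
    moreover have "\<alpha>^2 - \<beta>^2 = (\<alpha>+\<beta>)*(\<alpha>-\<beta>)" by (simp add: power2_eq_square algebra_simps)
    ultimately show ?thesis by (simp add: lucas_def P_def)
  qed
  have PmZ: "P ^ m \<in> \<int>" using hL L2 by metis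
  define p where "p = \<alpha> / P"
  define q where "q = \<beta> / P"
  have pq1: "p + q = 1" using P0 by (simp add: p_def q_def P_def add_divide_distrib[symmetric])
  have p0: "p \<noteq> 0" and q0: "q \<noteq> 0" using a0 b0 P0 by (auto simp: p_def q_def)
  have pqr: "p / q = \<alpha> / \<beta>" using P0 by (simp add: p_def q_def)
  have nrp: "\<not> (\<exists>k::nat. k > 0 \<and> (p/q) ^ k = 1)" using nr pqr by simp
  have pnq: "p \<noteq> q" using nrp q0 by (metis div_self power_one_right zero_less_one)
  define x where "x = p * q"
  have ux: "ev (gp n) x = lucas p q n" for n unfolding x_def by (rule gp_lucas[OF pq1 pnq])
  have uQ: "lucas p q n ^ m \<in> \<rat>" for n
  proof (cases n)
    case 0 thus ?thesis using m2 by (simp add: lucas_def)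
  next
    case (Suc k)
    have "\<alpha> - \<beta> \<noteq> 0" using pnq by (auto simp: p_def q_def)
    hence "lucas p q n = lucas \<alpha> \<beta> n / P ^ k"
      using P0 Suc by (simp add: lucas_def p_def q_def power_divide diff_divide_distrib[symmetric] field_simps)
    hence e: "lucas p q n ^ m = lucas \<alpha> \<beta> n ^ m / (P ^ m) ^ k"
      by (simp add: power_divide power_mult[symmetric] mult.commute)
    have r1: "lucas \<alpha> \<beta> n ^ m \<in> \<rat>" using hL[rule_format, of n] by (rule subsetD[OF Ints_subset_Rats])
    have r2: "(P ^ m) ^ k \<in> \<rat>" using subsetD[OF Ints_subset_Rats PmZ] by (rule Rats_power)
    show ?thesis unfolding e by (rule Rats_divide[OF r1 r2])
  qed
  define c where "c n = (SOME r. of_rat r = lucas p q n ^ m)" for n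
  have c: "of_rat (c n) = lucas p q n ^ m" for n
  proof -
    obtain r where "lucas p q n ^ m = of_rat r" using uQ[of n] by (auto elim: Rats_cases)
    thus ?thesis unfolding c_def by (metis (mono_tags) someI_ex)
  qed
  define H where "H n = gp n ^ m - [:c n:]" for n
  have evH: "ev (H n) z = ev (gp n) z ^ m - lucas p q n ^ m" for n z
    by (simp add: H_def map_rat_diff map_rat_power map_rat_const c)
  have xQ: "x \<in> \<rat>"
  proof (rule unique_root_rat[of H x "Suc (Suc (Suc 0))"])
    show "ev (H n) x = 0" for n using evH ux by simp
  next
    show "H (Suc (Suc (Suc 0))) \<noteq> 0"
    proof
      assume "H (Suc (Suc (Suc 0))) = 0"
      hence "ev (H (Suc (Suc (Suc 0)))) 1 = 0" by simp
      hence "lucas p q (Suc (Suc (Suc 0))) ^ m = 0" using m2 by (simp add: evH map_rat_diff map_rat_mult map_poly_pCons power_0_left)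
      hence "lucas p q (Suc (Suc (Suc 0))) = 0" by simp
      thus False using lucas_nz[OF q0 nrp] by blast
    qed
  next
    fix z assume zr: "\<And>n. ev (H n) z = 0" and zn: "z \<notin> \<rat>"
    define d where "d = csqrt (1 - 4 * z)"
    define a where "a = (1 + d) / 2"
    define b where "b = (1 - d) / 2"
    have ab1: "a + b = 1" by (simp add: a_def b_def add_divide_distrib[symmetric])
    have abz: "a * b = z"
    proof -
      have "a * b = (1 - d^2) / 4" by (simp add: a_def b_def power2_eq_square algebra_simps)
      thus ?thesis by (simp add: d_def)
    qed
    have d0: "d \<noteq> 0"
    proof
      assume "d = 0"
      hence "1 - 4 * z = 0" by (simp add: d_def)
      hence "z = of_rat (1/4)" by (simp add: field_simps of_rat_divide)
      thus False using zn by auto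
    qed
    have anb: "a \<noteq> b" using d0 by (simp add: a_def b_def)
    have a0': "a \<noteq> 0" and b0': "b \<noteq> 0"
    proof -
      have "z \<noteq> 0" using zn by auto
      thus "a \<noteq> 0" "b \<noteq> 0" using abz by auto
    qed
    have wz: "ev (gp n) z = lucas a b n" for n using gp_lucas[OF ab1 anb] abz by simp
    have eqn: "lucas a b n ^ m = lucas p q n ^ m" for n using zr[of n] evH wz by simp
    have nra: "\<not> (\<exists>k::nat. k > 0 \<and> (a/b) ^ k = 1)"
    proof
      assume "\<exists>k::nat. k > 0 \<and> (a/b) ^ k = 1"
      then obtain k where k: "k > 0" "(a/b)^k = 1" by blast
      hence "a^k = b^k" using b0' by (simp add: power_divide)
      hence "lucas a b k = 0" by (simp add: lucas_def)
      moreover have "(0::complex) ^ m = 0" using m2 by simp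
      ultimately have "lucas p q k ^ m = 0" using eqn[of k] by metis
      hence "lucas p q k = 0" by simp
      thus False using lucas_nz[OF q0 nrp k(1)] by simp
    qed
    have "a * b = p * q" by (rule core[OF pq1 ab1 p0 q0 a0' b0' m2 nrp nra eqn])
    thus "z = x" using abz x_def by simp
  qed
  obtain cm where cm: "P ^ m = of_int cm" using PmZ by (auto elim: Ints_cases)
  have algP: "algebraic_int P"
  proof (rule algebraic_int_root[of "of_int cm" "monom 1 m"])
    show "poly (monom 1 m) P = of_int cm" using cm by (simp add: poly_monom)
    show "\<forall>i. coeff (monom 1 m) i \<in> \<int>" by (simp add: coeff_monom)
    show "lead_coeff (monom (1::complex) m) = 1" by (simp add: degree_monom_eq)
    show "degree (monom (1::complex) m) > 0" using m2 by (simp add: degree_monom_eq)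
  qed simp
  show ?thesis
  proof (intro exI conjI disjI1 allI)
    show "algebraic_int P" by (rule algP)
    show "P ^ m \<in> \<rat>" using PmZ by (rule subsetD[OF Ints_subset_Rats])
    show "\<alpha> = P * p" using P0 by (simp add: p_def)
    show "\<beta> = P * q" using P0 by (simp add: q_def)
    show "lucas p q n \<in> \<rat>" for n using gp_rat[OF xQ, of n] ux by simp
  qed
qed

end
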